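(* Let $G$ be a finite undirected graph and $\tau\ge1$, $k$ integers. Then the $(k+1,\tau)$-truss of $G$ is contained in the $(k,\tau)$-truss of $G$.
   Context: Graphs are finite, simple, undirected and unweighted; paths may repeat vertices and their length is the number of edges. For vertices $v,u$ of a graph $H$, $u$ is $\tau$-hop reachable from $v$ in $H$ if there is a path between them in $H$ of length at most $\tau$. $N_\tau(v,H)$ is the set of vertices $u\ne v$ that are $\tau$-hop reachable from $v$ in $H$. For an edge $e=(u,v)$ of $H$, $\Delta_\tau(e,H)=N_\tau(u,H)\cap N_\tau(v,H)$ and $\mathrm{sup}_\tau(e,H)=|\Delta_\tau(e,H)|$. The $(k,\tau)$-truss of $G$ is the maximal subgraph $G'$ of $G$ such that $\mathrm{sup}_\tau(e,G')\ge k-2$ for every edge $e\in E(G')$ (supports computed inside $G'$) and no more edges of $G$ can be added while keeping this property; a subgraph is determined by its edge set. *)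

theory Defs
  imports Main
begin

definition simple_graph :: "'a set \<Rightarrow> 'a set set \<Rightarrow> bool" where
  "simple_graph V E \<longleftrightarrow> finite V \<and> (\<forall>e\<in>E. \<exists>u v. u \<in> V \<and> v \<in> V \<and> u \<noteq> v \<and> e = {u, v})"

definition is_walk :: "'a set set \<Rightarrow> 'a list \<Rightarrow> bool" where
  "is_walk F xs \<longleftrightarrow> xs \<noteq> [] \<and> (\<forall>i. Suc i < length xs \<longrightarrow> {xs ! i, xs ! Suc i} \<in> F)"

definition hop_reachable :: "'a set set \<Rightarrow> nat \<Rightarrow> 'a \<Rightarrow> 'a \<Rightarrow> bool" where
  "hop_reachable F \<tau> v u \<longleftrightarrow>
     (\<exists>xs. is_walk F xs \<and> hd xs = v \<and> last xs = u \<and> length xs - 1 \<le> \<tau>)"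

definition hop_nbhd :: "'a set set \<Rightarrow> nat \<Rightarrow> 'a \<Rightarrow> 'a set" where
  "hop_nbhd F \<tau> v = {u. u \<noteq> v \<and> hop_reachable F \<tau> v u}"

definition hop_support :: "'a set set \<Rightarrow> nat \<Rightarrow> 'a \<Rightarrow> 'a \<Rightarrow> nat" where
  "hop_support F \<tau> u v = card (hop_nbhd F \<tau> u \<inter> hop_nbhd F \<tau> v)"

definition truss_valid :: "'a set set \<Rightarrow> int \<Rightarrow> nat \<Rightarrow> bool" where
  "truss_valid F k \<tau> \<longleftrightarrow>
     (\<forall>u v. {u, v} \<in> F \<longrightarrow> u \<noteq> v \<longrightarrow> int (hop_support F \<tau> u v) \<ge> k - 2)"

definition is_k_tau_truss :: "'a set \<Rightarrow> 'a set set \<Rightarrow> int \<Rightarrow> nat \<Rightarrow> 'a set set \<Rightarrow> bool" where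
  "is_k_tau_truss V E k \<tau> F \<longleftrightarrow>
     F \<subseteq> E \<and> truss_valid F k \<tau> \<and>
     (\<forall>F'. F \<subset> F' \<and> F' \<subseteq> E \<longrightarrow> \<not> truss_valid F' k \<tau>)"

end

theory Submission
  imports Defs
begin

lemma walk_mono: "is_walk F xs \<Longrightarrow> F \<subseteq> F' \<Longrightarrow> is_walk F' xs"
  unfolding is_walk_def by blast

lemma reach_mono: "hop_reachable F t v u \<Longrightarrow> F \<subseteq> F' \<Longrightarrow> hop_reachable F' t v u"
  unfolding hop_reachable_def using walk_mono by metis

lemma nbhd_mono: "F \<subseteq> F' \<Longrightarrow> hop_nbhd F t v \<subseteq> hop_nbhd F' t v"
  unfolding hop_nbhd_def using reach_mono by (metis (mono_tags, lifting) mem_Collect_eq subsetI)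

lemma edge_in_V:
  assumes "simple_graph V E" "{a, u} \<in> E"
  shows "u \<in> V"
proof -
  obtain x y where "x \<in> V" "y \<in> V" "{a, u} = {x, y}"
    using assms unfolding simple_graph_def by meson
  thus ?thesis by (auto simp: doubleton_eq_iff)
qed

lemma nbhd_in_V:
  assumes "simple_graph V E" "F \<subseteq> E"
  shows "hop_nbhd F t v \<subseteq> V"
proof
  fix u assume "u \<in> hop_nbhd F t v"
  then obtain xs where w: "is_walk F xs" "hd xs = v" "last xs = u" "u \<noteq> v"
    unfolding hop_nbhd_def hop_reachable_def by blast
  have ne: "xs \<noteq> []" using w(1) unfolding is_walk_def by simp
  have l: "length xs \<ge> 2"
  proof (rule ccontr)
    assume "\<not> length xs \<ge> 2"
    moreover have "length xs > 0" using ne by simp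
    ultimately have "length xs = 1" by linarith
    then obtain a where "xs = [a]" by (metis One_nat_def length_0_conv length_Suc_conv)
    thus False using w by simp
  qed
  define n where "n = length xs - 2"
  have sn: "Suc n = length xs - 1" using l n_def by simp
  have "Suc n < length xs" using l n_def by simp
  hence "{xs ! n, xs ! Suc n} \<in> F" using w(1) unfolding is_walk_def by simp
  moreover have "xs ! Suc n = u" using w(3) ne sn
    by (simp add: last_conv_nth)
  ultimately have "{xs ! n, u} \<in> E" using assms(2) by auto
  then show "u \<in> V" using edge_in_V assms(1) by metis
qed

lemma support_mono:
  assumes "simple_graph V E" "F \<subseteq> F'" "F' \<subseteq> E"
  shows "hop_support F t u v \<le> hop_support F' t u v"
proof -
  have "finite V" using assms(1) unfolding simple_graph_def by blast
  hence "finite (hop_nbhd F' t u \<inter> hop_nbhd F' t v)"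
    using nbhd_in_V[OF assms(1) assms(3)] by (meson finite_Int finite_subset)
  moreover have "hop_nbhd F t u \<inter> hop_nbhd F t v \<subseteq> hop_nbhd F' t u \<inter> hop_nbhd F' t v"
    using nbhd_mono[OF assms(2)] by blast
  ultimately show ?thesis unfolding hop_support_def by (simp add: card_mono)
qed

theorem lemma1:
  fixes V :: "'a set" and E :: "'a set set" and k :: int and \<tau> :: nat
  assumes "simple_graph V E"
    and "\<tau> \<ge> 1"
    and "is_k_tau_truss V E (k + 1) \<tau> T1"
    and "is_k_tau_truss V E k \<tau> T2"
  shows "T1 \<subseteq> T2"
proof (rule ccontr)
  assume nsub: "\<not> T1 \<subseteq> T2"
  let ?U = "T1 \<union> T2"
  have UE: "?U \<subseteq> E" using assms(3,4) unfolding is_k_tau_truss_def by blast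
  have v1: "truss_valid T1 (k+1) \<tau>" and v2: "truss_valid T2 k \<tau>"
    using assms(3,4) unfolding is_k_tau_truss_def by blast+
  have "truss_valid ?U k \<tau>"
    unfolding truss_valid_def
  proof (intro allI impI)
    fix u v assume uv: "{u, v} \<in> ?U" "u \<noteq> v"
    show "int (hop_support ?U \<tau> u v) \<ge> k - 2"
    proof (cases "{u, v} \<in> T1")
      case True
      hence "int (hop_support T1 \<tau> u v) \<ge> k + 1 - 2" using v1 uv(2) unfolding truss_valid_def by simp
      moreover have "hop_support T1 \<tau> u v \<le> hop_support ?U \<tau> u v"
        using support_mono[OF assms(1) _ UE] by simp
      ultimately show ?thesis by linarith
    next
      case False
      hence "{u, v} \<in> T2" using uv by simp
      hence "int (hop_support T2 \<tau> u v) \<ge> k - 2" using v2 uv(2) unfolding truss_valid_def by simp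
      moreover have "hop_support T2 \<tau> u v \<le> hop_support ?U \<tau> u v"
        using support_mono[OF assms(1) _ UE] by simp
      ultimately show ?thesis by linarith
    qed
  qed
  moreover have "T2 \<subset> ?U" using nsub by blast
  ultimately show False using assms(4) UE unfolding is_k_tau_truss_def by meson
qed

end
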